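(* Let $L=L_2(q)=\mathrm{PSL}_2(q)$ be simple and let $r$ be an odd prime dividing $|L|$ but not dividing $q$. Then for every involution $x\in\mathrm{PGL}_2(q)$ (viewed as an automorphism of $L$) one has $\beta_r(x,L)=2$.
   Context: $\mathrm{PGL}_2(q)$ is identified with the group of inner-diagonal automorphisms of $L=\mathrm{PSL}_2(q)$. For a nonabelian finite simple group $L$ (identified with $\mathrm{Inn}(L)$), a nontrivial $x\in\mathrm{Aut}(L)$ and a prime $r$ dividing $|L|$, $\beta_r(x,L)$ is the smallest $k$ such that some $g_1,\dots,g_k\in L$ give a subgroup $\langle x^{g_1},\dots,x^{g_k}\rangle$ of $\langle L,x\rangle$ of order divisible by $r$. *)

theory Defs
  imports "HOL-Algebra.Algebra" "HOL-Analysis.Determinants"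
begin

text \<open>2x2 matrices over a finite field 'a with q = CARD('a) elements.\<close>

definition GL2 :: "('a::{finite,field}^2^2) monoid" where
  "GL2 = \<lparr>carrier = {A. det A \<noteq> 0}, monoid.mult = (\<lambda>A B. A ** B), one = mat 1\<rparr>"

definition scalars :: "('a::{finite,field}^2^2) set" where
  "scalars = {mat c | c. c \<noteq> 0}"

definition SL2 :: "('a::{finite,field}^2^2) set" where
  "SL2 = {A. det A = 1}"

definition PGL2 :: "('a::{finite,field}^2^2) set monoid" where
  "PGL2 = GL2 Mod scalars"

text \<open>PSL_2(q) as the image of SL_2(q) in PGL_2(q) (inner automorphisms of L).\<close>
definition PSL2 :: "('a::{finite,field}^2^2) set monoid" where
  "PSL2 = PGL2\<lparr>carrier := (\<lambda>A. scalars #>\<^bsub>GL2\<^esub> A) ` SL2\<rparr>"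

definition beta :: "('b, 'c) monoid_scheme \<Rightarrow> 'b set \<Rightarrow> 'b \<Rightarrow> nat \<Rightarrow> nat" where
  "beta G L x r = (LEAST k. \<exists>g. (\<forall>i<k. g i \<in> L) \<and>
      r dvd card (generate G ((\<lambda>i. inv\<^bsub>G\<^esub> (g i) \<otimes>\<^bsub>G\<^esub> x \<otimes>\<^bsub>G\<^esub> g i) ` {..<k})))"

end

theory Submission
  imports Defs
begin


lemma mm2: "((A::'a::comm_ring_1^2^2) ** B) $ i $ j = A$i$1 * B$1$j + A$i$2 * B$2$j"
  by (simp add: matrix_matrix_mult_def sum_2)

lemma mat_nth: "(mat k :: 'a::zero^'n^'n) $ i $ j = (if i = j then k else 0)"
  by (simp add: mat_def)

lemma m2_eq: "(A::'a^2^2) = B \<longleftrightarrow> A$1$1 = B$1$1 \<and> A$1$2 = B$1$2 \<and> A$2$1 = B$2$1 \<and> A$2$2 = B$2$2"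
  by (auto simp add: vec_eq_iff forall_2)

definition mk :: "'a \<Rightarrow> 'a \<Rightarrow> 'a \<Rightarrow> 'a \<Rightarrow> 'a^2^2" where
  "mk a b c d = (\<chi> i j. if i = 1 then (if j = 1 then a else b) else (if j = 1 then c else d))"

lemma mk_nth [simp]: "mk a b c d $ 1 $ 1 = a" "mk a b c d $ 1 $ 2 = b"
   "mk a b c d $ 2 $ 1 = c" "mk a b c d $ 2 $ 2 = d"
  by (simp_all add: mk_def)

lemma n21 [simp]: "(2::2) \<noteq> 1" "(1::2) \<noteq> 2" by simp_all

lemmas m2simps = mm2 mat_nth m2_eq det_2

definition tr2 :: "'a::comm_ring_1^2^2 \<Rightarrow> 'a" where "tr2 A = A$1$1 + A$2$2"

definition inv2 :: "'a::field^2^2 \<Rightarrow> 'a^2^2" where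
  "inv2 A = mk (inverse (det A) * A$2$2) (- (inverse (det A) * A$1$2))
      (- (inverse (det A) * A$2$1)) (inverse (det A) * A$1$1)"

lemma inv2_l: assumes "det A \<noteq> 0" shows "inv2 A ** A = mat 1"
proof -
  have e: "inverse (det A) * (A$1$1*A$2$2 - A$1$2*A$2$1) = 1" using assms by (simp add: det_2[symmetric])
  show ?thesis unfolding m2_eq inv2_def mm2 mat_nth mk_nth
    by (intro conjI; simp only: if_True if_False n21 refl;
      ((simp add: algebra_simps; fail) | (rule trans[OF _ e], simp add: algebra_simps)))
qed

lemma inv2_r: assumes "det A \<noteq> 0" shows "A ** inv2 A = mat 1"
proof -
  have e: "inverse (det A) * (A$1$1*A$2$2 - A$1$2*A$2$1) = 1" using assms by (simp add: det_2[symmetric])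
  show ?thesis unfolding m2_eq inv2_def mm2 mat_nth mk_nth
    by (intro conjI; simp only: if_True if_False n21 refl;
      ((simp add: algebra_simps; fail) | (rule trans[OF _ e], simp add: algebra_simps)))
qed

lemma det_inv2: "det A \<noteq> 0 \<Longrightarrow> det (inv2 A) = 1 / det A"
  by (metis det_I det_mul inv2_l nonzero_eq_divide_eq)

lemma tr2_comm: "tr2 (A ** B) = tr2 (B ** A)"
  by (simp add: tr2_def mm2 algebra_simps)

lemma GL2_simps [simp]: "carrier GL2 = {A. det A \<noteq> 0}" "monoid.mult GL2 A B = A ** B" "one GL2 = mat 1"
  by (simp_all add: GL2_def)

lemma GL2_group: "group (GL2 :: ('a::{finite,field}^2^2) monoid)"
proof (rule groupI)
  fix x :: "'a^2^2" assume "x \<in> carrier GL2"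
  then show "\<exists>y\<in>carrier GL2. y \<otimes>\<^bsub>GL2\<^esub> x = \<one>\<^bsub>GL2\<^esub>"
    by (intro bexI[of _ "inv2 x"]) (auto simp: inv2_l det_inv2)
qed (auto simp: det_mul matrix_mul_assoc)

lemma inv_GL2: "A \<in> carrier GL2 \<Longrightarrow> inv\<^bsub>GL2\<^esub> A = inv2 (A::'a::{finite,field}^2^2)"
  using group.inv_equality[OF GL2_group, of "inv2 A" A] by (simp add: inv2_l det_inv2)

lemma mat_comm: "mat c ** (A::'a::comm_ring_1^2^2) = A ** (mat c :: 'a::comm_ring_1^2^2)"
  unfolding m2_eq mm2 mat_nth by (simp add: algebra_simps)

lemma det_mat2 [simp]: "det (mat c :: 'a::comm_ring_1^2^2) = c * c"
  by (simp add: det_2 mat_nth)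

lemma inv2_mat: "(c::'a::field) \<noteq> 0 \<Longrightarrow> inv2 (mat c :: 'a^2^2) = mat (inverse c)"
  unfolding m2_eq inv2_def by (simp add: mat_nth)

lemma mat_mult_mat: "mat c ** mat e = (mat (c * e) :: 'a::comm_ring_1^2^2)"
  unfolding m2_eq mm2 by (simp add: mat_nth)

lemma mat1_scalars: "mat 1 \<in> (scalars :: ('a::{finite,field}^2^2) set)"
  unfolding scalars_def by (intro CollectI exI[of _ 1]) simp

lemma scalars_ne: "(scalars :: ('a::{finite,field}^2^2) set) \<noteq> {}"
  using mat1_scalars by (metis empty_iff)

lemma scalars_sub: "(scalars :: ('a::{finite,field}^2^2) set) \<subseteq> carrier GL2"
  by (auto simp: scalars_def)

lemma scalars_subgroup: "subgroup scalars (GL2 :: ('a::{finite,field}^2^2) monoid)"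
proof (rule group.subgroupI[OF GL2_group])
  show "scalars \<subseteq> carrier (GL2 :: ('a^2^2) monoid)" by (rule scalars_sub)
  show "(scalars :: ('a^2^2) set) \<noteq> {}" by (rule scalars_ne)
  fix a b :: "'a^2^2" assume a: "a \<in> scalars" and b: "b \<in> scalars"
  then obtain c where c: "a = mat c" "c \<noteq> 0" by (auto simp: scalars_def)
  have "inv\<^bsub>GL2\<^esub> a = mat (inverse c)" using c inv_GL2[of a] inv2_mat[of c] by simp
  then show "inv\<^bsub>GL2\<^esub> a \<in> scalars" using c unfolding scalars_def by (intro CollectI exI[of _ "inverse c"]) simp
  obtain e where e: "b = mat e" "e \<noteq> 0" using b by (auto simp: scalars_def)
  have "a \<otimes>\<^bsub>GL2\<^esub> b = mat (c*e)" using c e by (simp add: mat_mult_mat)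
  then show "a \<otimes>\<^bsub>GL2\<^esub> b \<in> scalars" using c e unfolding scalars_def by (intro CollectI exI[of _ "c*e"]) simp
qed

lemma scalars_normal: "scalars \<lhd> (GL2 :: ('a::{finite,field}^2^2) monoid)"
  unfolding group.normal_inv_iff[OF GL2_group]
proof (intro conjI scalars_subgroup ballI)
  fix x h :: "'a^2^2" assume x: "x \<in> carrier GL2" and h: "h \<in> scalars"
  then obtain c where c: "h = mat c" by (auto simp: scalars_def)
  have xh: "x ** h = h ** x" using c mat_comm by metis
  have "x \<otimes>\<^bsub>GL2\<^esub> h \<otimes>\<^bsub>GL2\<^esub> inv\<^bsub>GL2\<^esub> x = h \<otimes>\<^bsub>GL2\<^esub> (x \<otimes>\<^bsub>GL2\<^esub> inv\<^bsub>GL2\<^esub> x)"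
    using xh by (simp add: matrix_mul_assoc)
  also have "\<dots> = h" using x h group.r_inv[OF GL2_group x] by simp
  finally show "x \<otimes>\<^bsub>GL2\<^esub> h \<otimes>\<^bsub>GL2\<^esub> inv\<^bsub>GL2\<^esub> x \<in> scalars" using h by simp
qed

abbreviation cls :: "'a::{finite,field}^2^2 \<Rightarrow> ('a^2^2) set" where
  "cls A \<equiv> scalars #>\<^bsub>GL2\<^esub> A"

lemma PGL2_group: "group (PGL2 :: ('a::{finite,field}^2^2) set monoid)"
  unfolding PGL2_def by (rule normal.factorgroup_is_group[OF scalars_normal])

lemma PGL2_carrier: "carrier (PGL2 :: ('a::{finite,field}^2^2) set monoid) = cls ` carrier GL2"
  unfolding PGL2_def by (rule carrier_FactGroup)

lemma PGL2_one: "one (PGL2 :: ('a::{finite,field}^2^2) set monoid) = scalars"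
  unfolding PGL2_def by simp

lemma cls_mult: "A \<in> carrier GL2 \<Longrightarrow> B \<in> carrier GL2 \<Longrightarrow>
   cls A \<otimes>\<^bsub>PGL2\<^esub> cls B = cls (A ** (B::'a::{finite,field}^2^2))"
  unfolding PGL2_def using normal.rcos_sum[OF scalars_normal, of A B] by simp

lemma cls_inv: "A \<in> carrier GL2 \<Longrightarrow> inv\<^bsub>PGL2\<^esub> (cls A) = cls (inv2 (A::'a::{finite,field}^2^2))"
proof -
  assume A: "A \<in> carrier GL2"
  have "cls A \<in> carrier (GL2 Mod scalars)" using A by (simp add: carrier_FactGroup)
  then have "inv\<^bsub>PGL2\<^esub> (cls A) = set_inv\<^bsub>GL2\<^esub> (cls A)"
    unfolding PGL2_def by (rule normal.inv_FactGroup[OF scalars_normal])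
  also have "\<dots> = cls (inv\<^bsub>GL2\<^esub> A)" by (rule normal.rcos_inv[OF scalars_normal A])
  finally show ?thesis using inv_GL2[OF A] by simp
qed

lemma cls_scalar: "A \<in> scalars \<Longrightarrow> cls A = (scalars :: ('a::{finite,field}^2^2) set)"
  by (rule subgroup.rcos_const[OF normal.axioms(1)[OF scalars_normal] GL2_group])

lemma cls_one_iff: "A \<in> carrier GL2 \<Longrightarrow> (cls A = scalars) \<longleftrightarrow> (A::'a::{finite,field}^2^2) \<in> scalars"
proof
  assume A: "A \<in> carrier GL2" and "cls A = scalars"
  then show "A \<in> scalars"
    using group.rcos_self[OF GL2_group A normal.axioms(1)[OF scalars_normal]] by simp
next
  assume "A \<in> scalars"
  then show "cls A = scalars" by (rule cls_scalar)
qed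

lemma cls_pow: "A \<in> carrier GL2 \<Longrightarrow>
   cls A [^]\<^bsub>PGL2\<^esub> (n::nat) = cls ((A::'a::{finite,field}^2^2) [^]\<^bsub>GL2\<^esub> n)"
proof (induction n)
  case 0
  then show ?case using cls_scalar[OF mat1_scalars] by (simp only: nat_pow_0 PGL2_one GL2_simps(3)) (rule sym)
next
  case (Suc n)
  have "A [^]\<^bsub>GL2\<^esub> n \<in> carrier GL2" using Suc.prems monoid.nat_pow_closed[OF group.is_monoid[OF GL2_group]] by blast
  then have "cls A [^]\<^bsub>PGL2\<^esub> Suc n = cls (A [^]\<^bsub>GL2\<^esub> n) \<otimes>\<^bsub>PGL2\<^esub> cls A"
    using Suc by (simp only: nat_pow_Suc)
  also have "\<dots> = cls (A [^]\<^bsub>GL2\<^esub> n ** A)" by (rule cls_mult[OF \<open>A [^]\<^bsub>GL2\<^esub> n \<in> carrier GL2\<close> Suc.prems])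
  finally show ?case by (simp only: nat_pow_Suc GL2_simps)
qed

lemma pow_upd: "x [^]\<^bsub>G\<lparr>carrier := S\<rparr>\<^esub> (n::nat) = x [^]\<^bsub>G\<^esub> n"
  by (simp add: nat_pow_def)

lemma PSL2_pow: "x [^]\<^bsub>PSL2\<^esub> (n::nat) = x [^]\<^bsub>PGL2\<^esub> n"
  unfolding PSL2_def by (rule pow_upd)




fun luc :: "'a::comm_ring_1 \<Rightarrow> 'a \<Rightarrow> nat \<Rightarrow> 'a \<times> 'a" where
  "luc s d 0 = (0, 1)"
| "luc s d (Suc n) = (s * fst (luc s d n) + snd (luc s d n), - d * fst (luc s d n))"

lemma GL2_pow_closed: "A \<in> carrier GL2 \<Longrightarrow> A [^]\<^bsub>GL2\<^esub> (n::nat) \<in> carrier (GL2::('a::{finite,field}^2^2) monoid)"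
  using monoid.nat_pow_closed[OF group.is_monoid[OF GL2_group]] by blast

lemma pow_repr: "\<forall>i j. ((A::'a::{finite,field}^2^2) [^]\<^bsub>GL2\<^esub> (n::nat)) $ i $ j =
   fst (luc (tr2 A) (det A) n) * A$i$j + (if i = j then snd (luc (tr2 A) (det A) n) else 0)"
proof (induction n)
  case 0
  then show ?case by (simp add: mat_nth)
next
  case (Suc n)
  obtain a b where ab: "luc (tr2 A) (det A) n = (a, b)" by (cases "luc (tr2 A) (det A) n")
  have IH: "(A [^]\<^bsub>GL2\<^esub> n) $ i $ j = a * A$i$j + (if i = j then b else 0)" for i j
    using Suc ab by simp
  have ab': "luc (tr2 A) (det A) (Suc n) = (tr2 A * a + b, - det A * a)" using ab by simp
  show ?case
  proof (intro allI)
    fix i j :: 2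
    have "(A [^]\<^bsub>GL2\<^esub> Suc n) $ i $ j = (A [^]\<^bsub>GL2\<^esub> n) $ i $ 1 * A$1$j + (A [^]\<^bsub>GL2\<^esub> n) $ i $ 2 * A$2$j"
      by (simp add: mm2)
    also have "\<dots> = (tr2 A * a + b) * A$i$j + (if i = j then - det A * a else 0)"
      unfolding IH
      using exhaust_2[of i] exhaust_2[of j]
      by (elim disjE; simp add: tr2_def det_2 algebra_simps)
    finally show "(A [^]\<^bsub>GL2\<^esub> Suc n) $ i $ j = fst (luc (tr2 A) (det A) (Suc n)) * A$i$j + (if i = j then snd (luc (tr2 A) (det A) (Suc n)) else 0)"
      unfolding ab' by simp
  qed
qed

lemma luc_step: "l * a' = L * a \<Longrightarrow> b' = L * b \<Longrightarrow>
   l * (l * s * a' + b') = l * L * (s * a + b) \<and> - (l^2 * d) * a' = l * L * (- d * (a::'a::field))"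
proof -
  assume h: "l * a' = L * a" and hb: "b' = L * b"
  have "l * (l * s * a' + b') = s * l * (l * a') + l * L * b" using hb by (simp add: algebra_simps)
  also have "\<dots> = l * L * (s * a + b)" using h by (simp add: algebra_simps)
  finally have 1: "l * (l * s * a' + b') = l * L * (s * a + b)" .
  have "- (l^2 * d) * a' = - (l * d) * (l * a')" by (simp add: algebra_simps power2_eq_square)
  also have "\<dots> = l * L * (- d * a)" using h by (simp add: algebra_simps)
  finally show ?thesis using 1 by simp
qed

lemma luc_scale: "l * fst (luc (l * s) (l^2*d) n) = l^n * fst (luc s d n) \<and> snd (luc (l * s) (l^2*d) n) = l^n * snd (luc (s::'a::field) d n)"
proof (induction n)
  case 0
  then show ?case by simp
next
  case (Suc n)
  then show ?case
    using luc_step[of l "fst (luc (l * s) (l^2*d) n)" "l^n" "fst (luc s d n)" "snd (luc (l * s) (l^2*d) n)" "snd (luc s d n)" s d]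
    by (simp only: luc.simps fst_conv snd_conv power_Suc)
qed

lemma pow_scalars_iff:
  assumes A: "(A::'a::{finite,field}^2^2) \<in> carrier GL2" and ns: "A \<notin> scalars"
  shows "A [^]\<^bsub>GL2\<^esub> (n::nat) \<in> scalars \<longleftrightarrow> fst (luc (tr2 A) (det A) n) = 0"
proof -
  define a where "a = fst (luc (tr2 A) (det A) n)"
  define b where "b = snd (luc (tr2 A) (det A) n)"
  have P: "\<forall>i j. (A [^]\<^bsub>GL2\<^esub> n) $ i $ j = a * A$i$j + (if i = j then b else 0)"
    using pow_repr[of A n] by (simp add: a_def b_def)
  have dP: "det (A [^]\<^bsub>GL2\<^esub> n) \<noteq> 0" using GL2_pow_closed[OF A, of n] by simp
  show ?thesis unfolding a_def[symmetric]
  proof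
    assume "A [^]\<^bsub>GL2\<^esub> n \<in> scalars"
    then obtain c where c: "A [^]\<^bsub>GL2\<^esub> n = mat c" by (auto simp: scalars_def)
    show "a = 0"
    proof (rule ccontr)
      assume a: "a \<noteq> 0"
      have e: "a * A$i$j + (if i = j then b else 0) = (if i = j then c else 0)" for i j
        using P c by (metis mat_nth)
      have "A$i$j = (if i = j then (c - b) / a else 0)" for i j
      proof (cases "i = j")
        case True
        then have "a * A$i$j + b = c" using e[of i j] by simp
        then show ?thesis using True a by (simp add: eq_divide_eq algebra_simps)
      next
        case False
        then have "a * A$i$j = 0" using e[of i j] by simp
        then show ?thesis using False a by simp
      qed
      then have Am: "A = mat ((c - b) / a)" by (simp add: vec_eq_iff mat_nth)
      moreover have "(c - b) / a \<noteq> 0"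
      proof
        assume "(c - b) / a = 0"
        then have "det A = 0" using Am by simp
        then show False using A by simp
      qed
      ultimately show False using ns by (auto simp: scalars_def)
    qed
  next
    assume a0: "a = 0"
    have "A [^]\<^bsub>GL2\<^esub> n = mat b" using P a0 unfolding m2_eq by (simp add: mat_nth)
    moreover have "b \<noteq> 0" using dP calculation by auto
    ultimately show "A [^]\<^bsub>GL2\<^esub> n \<in> scalars" by (auto simp: scalars_def)
  qed
qed

lemma cls_pow_one_iff:
  assumes A: "(A::'a::{finite,field}^2^2) \<in> carrier GL2" and ns: "A \<notin> scalars"
  shows "cls A [^]\<^bsub>PGL2\<^esub> (n::nat) = \<one>\<^bsub>PGL2\<^esub> \<longleftrightarrow> fst (luc (tr2 A) (det A) n) = 0"
  using cls_pow[OF A, of n] cls_one_iff[OF GL2_pow_closed[OF A, of n]] pow_scalars_iff[OF A ns, of n]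
  by (simp add: PGL2_one)



lemma sq_card: "CARD('a::{finite,field}) + 1 \<le> 2 * card (range (\<lambda>x::'a. x * x))"
proof -
  define S where "S = range (\<lambda>x::'a. x * x)"
  define sel where "sel s = (SOME z::'a. z * z = s)" for s
  have sel: "sel (x * x) * sel (x * x) = x * x" for x
    unfolding sel_def by (rule someI[of _ x]) simp
  define f where "f x = (x * x, x = sel (x * x))" for x
  have inj: "inj f"
  proof (rule injI)
    fix x y assume "f x = f y"
    then have xy: "x * x = y * y" and e: "(x = sel (x * x)) = (y = sel (y * y))" by (auto simp: f_def)
    have x: "x = sel (x * x) \<or> x = - sel (x * x)" using sel[of x] by (metis square_eq_iff)
    have y: "y = sel (x * x) \<or> y = - sel (x * x)" using sel[of x] xy by (metis square_eq_iff)
    show "x = y" using x y e xy by auto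
  qed
  have img: "f ` UNIV \<subseteq> (S \<times> UNIV) - {(0, False)}"
  proof
    fix z assume "z \<in> f ` UNIV"
    then obtain x where z: "z = f x" by auto
    have "z \<noteq> (0, False)"
    proof
      assume "z = (0, False)"
      then have "x * x = 0" and "x \<noteq> sel (x * x)" using z by (auto simp: f_def)
      moreover have "sel 0 = 0" using sel[of 0] by simp
      ultimately show False by simp
    qed
    then show "z \<in> (S \<times> UNIV) - {(0, False)}" using z by (auto simp: f_def S_def)
  qed
  have "CARD('a) = card (f ` UNIV)" using inj by (simp add: card_image)
  also have "\<dots> \<le> card ((S \<times> (UNIV::bool set)) - {(0, False)})" by (rule card_mono) (auto simp: img)
  also have "\<dots> = 2 * card S - 1"
    using card_Diff_singleton[of "(0::'a, False)" "S \<times> (UNIV::bool set)"]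
    by (simp add: S_def card_cartesian_product image_iff)
  finally have "CARD('a) \<le> 2 * card S - 1" .
  moreover have "card S \<ge> 1" unfolding S_def by (simp add: Suc_le_eq card_gt_0_iff)
  ultimately show ?thesis unfolding S_def by linarith
qed

lemma sq_sum: assumes a: "(a::'a::{finite,field}) \<noteq> 0" shows "\<exists>x y. x * x + a * (y * y) = c"
proof -
  define S where "S = range (\<lambda>x::'a. x * x)"
  define T where "T = (\<lambda>s. c - a * s) ` S"
  have cT: "card T = card S" unfolding T_def
    by (rule card_image) (use a in \<open>auto simp: inj_on_def\<close>)
  have cS: "CARD('a) + 1 \<le> 2 * card S" unfolding S_def by (rule sq_card)
  have "S \<inter> T \<noteq> {}"
  proof
    assume "S \<inter> T = {}"
    then have "card (S \<union> T) = card S + card T" by (simp add: card_Un_disjoint)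
    moreover have "card (S \<union> T) \<le> CARD('a)" by (rule card_mono) auto
    ultimately show False using cT cS by linarith
  qed
  then obtain z where zS: "z \<in> S" and zT: "z \<in> T" by blast
  obtain x where x: "z = x * x" using zS by (auto simp: S_def)
  obtain y where y: "z = c - a * (y * y)" using zT by (auto simp: S_def T_def)
  from x y have "x * x + a * (y * y) = c" by (metis diff_add_cancel)
  then show ?thesis by blast
qed

lemma sq_surj: assumes "(2::'a::{finite,field}) = 0" shows "\<exists>x::'a. x * x = c"
proof -
  have "inj (\<lambda>x::'a. x * x)"
  proof (rule injI)
    fix x y :: 'a assume "x * x = y * y"
    then have "x = y \<or> x = - y" by (simp add: square_eq_iff)
    moreover have "- y = y" using assms by (metis add_eq_0_iff2 mult_2 mult_zero_left)
    ultimately show "x = y" by auto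
  qed
  then have "surj (\<lambda>x::'a. x * x)" by (simp add: finite_UNIV_inj_surj)
  then show ?thesis by (metis surjD)
qed

lemma of_nat_card: "of_nat CARD('a) = (0::'a::{finite,comm_ring_1})"
proof -
  have "(\<Sum>x\<in>UNIV. x) = (\<Sum>x\<in>UNIV. x + (1::'a))"
  proof -
    have bij: "bij_betw (\<lambda>x::'a. x + 1) UNIV UNIV"
      by (rule bij_betwI[of _ _ _ "\<lambda>x. x - 1"]) auto
    show ?thesis using sum.reindex_bij_betw[OF bij, of "\<lambda>x. x"] by simp
  qed
  also have "\<dots> = (\<Sum>x\<in>UNIV. x) + of_nat CARD('a)" by (simp add: sum.distrib)
  finally show ?thesis by simp
qed



definition C0 :: "'a::comm_ring_1 \<Rightarrow> 'a^2^2" where "C0 D = mk 0 (-D) 1 0"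

lemma E2: assumes D: "(D::'a::{finite,field}) \<noteq> 0" and s: "s \<noteq> 0"
  shows "\<exists>q v. v \<noteq> 0 \<and> q * q + D * (v * v) + s * v + D = 0"
proof (cases "(2::'a) = 0")
  case True
  obtain q where q: "q * q = - (D + s + D)" using sq_surj[OF True] by blast
  show ?thesis by (rule exI[of _ q], rule exI[of _ 1]) (simp add: q)
next
  case False
  have D4: "4 * D \<noteq> 0" using False D by (metis mult_eq_0_iff mult_2 numeral_Bit0)
  obtain w y where wy: "w * w + (4 * D) * (y * y) = s * s - 4 * D * D" using sq_sum[OF D4] by blast
  obtain w' where w': "w' * w' + (4 * D) * (y * y) = s * s - 4 * D * D" "w' \<noteq> s"
  proof (cases "w = s")
    case True
    have "- w \<noteq> s" using True s False by (metis add_eq_0_iff2 mult_2 mult_eq_0_iff)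
    then show ?thesis using that[of "- w"] wy by simp
  next
    case False
    then show ?thesis using that[of w] wy by simp
  qed
  define v where "v = (w' - s) / (2 * D)"
  have v2: "2 * D * v = w' - s" unfolding v_def using False D by simp
  have "v \<noteq> 0" using v2 w'(2) by auto
  have "4 * D * (y * y + D * (v * v) + s * v + D) = 4 * D * (y * y) + (2 * D * v) * (2 * D * v) + 2 * s * (2 * D * v) + 4 * D * D"
    by (simp add: algebra_simps)
  also have "\<dots> = 4 * D * (y * y) + (w' - s) * (w' - s) + 2 * s * (w' - s) + 4 * D * D" by (simp only: v2)
  also have "\<dots> = w' * w' + (4 * D) * (y * y) - (s * s - 4 * D * D)" by (simp add: algebra_simps)
  also have "\<dots> = 0" using w'(1) by simp
  finally have "y * y + D * (v * v) + s * v + D = 0" using D4 by simp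
  then show ?thesis using \<open>v \<noteq> 0\<close> by blast
qed

lemma trE: "p * v - q * u = 1 \<Longrightarrow>
  tr2 (C0 D ** inv2 (mk p q u v) ** C0 D ** mk p q u (v::'a::field)) = - (D * D * (u * u) + D * (p * p) + D * (v * v) + q * q)"
  by (simp add: tr2_def mm2 inv2_def det_2 C0_def algebra_simps)

lemma E_exists: assumes D: "(D::'a::{finite,field}) \<noteq> 0" and s: "s \<noteq> 0"
  shows "\<exists>K. det K = 1 \<and> tr2 (C0 D ** inv2 K ** C0 D ** K) = s"
proof -
  obtain q0 v0 where v0: "v0 \<noteq> 0" and e: "q0 * q0 + D * (v0 * v0) + s * v0 + D = 0" using E2[OF D s] by blast
  obtain al be where ab: "al * al + D * (be * be) = inverse v0" using sq_sum[OF D] by blast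
  define K where "K = mk al (al * q0 - D * be * v0) be (be * q0 + al * v0)"
  have "al * (be * q0 + al * v0) - (al * q0 - D * be * v0) * be = (al * al + D * (be * be)) * v0"
    by (simp add: algebra_simps)
  also have "\<dots> = 1" using ab v0 by simp
  finally have d: "al * (be * q0 + al * v0) - (al * q0 - D * be * v0) * be = 1" .
  then have dK: "det K = 1" by (simp add: K_def det_2)
  have "tr2 (C0 D ** inv2 K ** C0 D ** K) = - (D * D * (be * be) + D * (al * al) + D * ((be * q0 + al * v0) * (be * q0 + al * v0)) + (al * q0 - D * be * v0) * (al * q0 - D * be * v0))"
    unfolding K_def by (rule trE[OF d])
  also have "\<dots> = - (al * al + D * (be * be)) * (q0 * q0 + D * (v0 * v0) + D)" by (simp add: algebra_simps)
  also have "\<dots> = (al * al + D * (be * be)) * (s * v0)"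
  proof -
    have "(q0 * q0 + D * (v0 * v0) + D) + s * v0 = 0" using e by (simp add: algebra_simps)
    then have "q0 * q0 + D * (v0 * v0) + D = - (s * v0)" by (simp add: add_eq_0_iff2)
    then show ?thesis by (simp add: algebra_simps)
  qed
  also have "\<dots> = s" using ab v0 by simp
  finally show ?thesis using dK by blast
qed



lemma E1: assumes t: "Y$2$2 = - Y$1$1" and ns: "\<not> (Y$1$2 = 0 \<and> Y$2$1 = 0 \<and> Y$1$1 = Y$2$2)"
  shows "\<exists>H. det H \<noteq> 0 \<and> Y ** H = H ** C0 (det (Y::'a::field^2^2))"
proof -
  define a where "a = Y$1$1"
  define b where "b = Y$1$2"
  define c where "c = Y$2$1"
  have Y: "Y = mk a b c (-a)" unfolding m2_eq by (simp add: a_def b_def c_def t)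
  have dX: "det Y = - (a * a) - b * c" by (simp add: Y det_2)
  show ?thesis
  proof (cases "c = 0")
    case False
    show ?thesis
      by (rule exI[of _ "mk 1 a 0 c"]) (simp add: False det_2 Y dX C0_def m2_eq mm2 algebra_simps)
  next
    case c0: True
    show ?thesis
    proof (cases "b = 0")
      case False
      show ?thesis
        by (rule exI[of _ "mk 0 b 1 (-a)"]) (simp add: False c0 det_2 Y dX C0_def m2_eq mm2 algebra_simps)
    next
      case True
      have "a \<noteq> - a" using ns True c0 by (simp add: a_def b_def c_def t)
      then have "- a - a \<noteq> 0" by (metis add_uminus_conv_diff eq_neg_iff_add_eq_0 minus_diff_eq)
      then show ?thesis
        by (intro exI[of _ "mk 1 a 1 (-a)"]) (simp add: True c0 det_2 Y dX C0_def m2_eq mm2 algebra_simps)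
    qed
  qed
qed

lemma inv2_unique: "det A \<noteq> 0 \<Longrightarrow> B ** A = mat 1 \<Longrightarrow> inv2 A = (B::'a::field^2^2)"
  by (metis inv2_r matrix_mul_assoc matrix_mul_lid matrix_mul_rid)

lemma cancel1: "det H \<noteq> 0 \<Longrightarrow> A ** inv2 H ** H = (A::'a::field^2^2)"
  by (metis inv2_l matrix_mul_assoc matrix_mul_rid)

lemma cancel2: "det H \<noteq> 0 \<Longrightarrow> A ** H ** inv2 H = (A::'a::field^2^2)"
  by (metis inv2_r matrix_mul_assoc matrix_mul_rid)

lemma conj_trace:
  assumes dX: "det Y \<noteq> 0" and t: "Y$2$2 = - Y$1$1" and ns: "\<not> (Y$1$2 = 0 \<and> Y$2$1 = 0 \<and> Y$1$1 = Y$2$2)"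
    and s: "s \<noteq> 0"
  shows "\<exists>G. det G = 1 \<and> tr2 (Y ** (inv2 G ** Y ** G)) = s \<and> det (Y ** (inv2 G ** Y ** (G::'a::{finite,field}^2^2))) = det Y * det Y"
proof -
  define D where "D = det Y"
  obtain H where dH: "det H \<noteq> 0" and YH: "Y ** H = H ** C0 D" using E1[OF t ns] unfolding D_def by blast
  obtain K where dK: "det K = 1" and trK: "tr2 (C0 D ** inv2 K ** C0 D ** K) = s"
    using E_exists[OF dX[folded D_def] s] by blast
  define C where "C = C0 D"
  define Hi where "Hi = inv2 H"
  define G where "G = H ** K ** Hi"
  have HiH: "Hi ** H = mat 1" unfolding Hi_def by (rule inv2_l[OF dH])
  have HHi: "H ** Hi = mat 1" unfolding Hi_def by (rule inv2_r[OF dH])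
  have dHi: "det Hi * det H = 1" using HiH by (metis det_I det_mul)
  have Ye: "Y = H ** C ** Hi" unfolding C_def Hi_def using YH cancel2[OF dH, of Y] by metis
  have dG: "det G = 1" unfolding G_def using dHi dK by (simp add: det_mul algebra_simps)
  have Gi: "inv2 G = H ** inv2 K ** Hi"
  proof (rule inv2_unique)
    show "det G \<noteq> 0" using dG by simp
    have "H ** inv2 K ** Hi ** G = H ** inv2 K ** (Hi ** H) ** K ** Hi"
      unfolding G_def by (simp add: matrix_mul_assoc)
    also have "\<dots> = H ** (inv2 K ** K) ** Hi" by (simp add: HiH matrix_mul_assoc)
    also have "\<dots> = mat 1" using dK by (simp add: inv2_l HHi)
    finally show "H ** inv2 K ** Hi ** G = mat 1" .
  qed
  have M: "Y ** (inv2 G ** Y ** G) = H ** (C ** inv2 K ** C ** K) ** Hi"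
    unfolding Gi unfolding G_def Ye Hi_def using dH by (simp add: matrix_mul_assoc cancel1)
  have "tr2 (Y ** (inv2 G ** Y ** G)) = tr2 (C ** inv2 K ** C ** K)"
    unfolding M by (metis HiH matrix_mul_assoc matrix_mul_lid tr2_comm)
  also have "\<dots> = s" using trK by (simp add: C_def)
  finally have 1: "tr2 (Y ** (inv2 G ** Y ** G)) = s" .
  have "det (Y ** (inv2 G ** Y ** G)) = det Y * det Y * (det (inv2 G) * det G)"
    by (simp add: det_mul algebra_simps)
  also have "det (inv2 G) * det G = 1" using dG by (metis det_I det_mul inv2_l one_neq_zero)
  finally show ?thesis using 1 dG by auto
qed



lemma PSL2_carrier: "carrier (PSL2 :: ('a::{finite,field}^2^2) set monoid) = cls ` SL2"
  unfolding PSL2_def by simp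

lemma PSL2_one: "one (PSL2 :: ('a::{finite,field}^2^2) set monoid) = scalars"
  unfolding PSL2_def by (simp add: PGL2_one)

lemma PSL2_sub: "carrier (PSL2 :: ('a::{finite,field}^2^2) set monoid) \<subseteq> carrier PGL2"
  unfolding PSL2_carrier PGL2_carrier SL2_def by auto

lemma finite_gen: "finite (S :: ('a::{finite,field}^2^2) set set)"
  by (rule finite_subset[OF subset_UNIV]) simp

lemma lower:
  fixes x :: "('a::{finite,field}^2^2) set" and r k :: nat and g :: "nat \<Rightarrow> ('a^2^2) set"
  assumes r: "Factorial_Ring.prime r" "odd r"
    and x: "x \<in> carrier PGL2" and xx: "x \<otimes>\<^bsub>PGL2\<^esub> x = \<one>\<^bsub>PGL2\<^esub>"
    and k: "k < 2" and g: "\<forall>i<k. g i \<in> carrier PSL2"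
  shows "\<not> r dvd card (generate PGL2 ((\<lambda>i. inv\<^bsub>PGL2\<^esub> (g i) \<otimes>\<^bsub>PGL2\<^esub> x \<otimes>\<^bsub>PGL2\<^esub> g i) ` {..<k}))"
proof -
  interpret P: group "PGL2 :: ('a^2^2) set monoid" by (rule PGL2_group)
  have r2: "r \<noteq> 2" using r(2) by (metis even_numeral)
  have r3: "r \<ge> 3" using prime_ge_2_nat[OF r(1)] r2 by linarith
  let ?S = "(\<lambda>i. inv\<^bsub>PGL2\<^esub> (g i) \<otimes>\<^bsub>PGL2\<^esub> x \<otimes>\<^bsub>PGL2\<^esub> g i) ` {..<k}"
  have "card (generate PGL2 ?S) \<le> 2"
  proof (cases "k = 0")
    case True
    then show ?thesis by (simp add: P.generate_empty)
  next
    case False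
    then have k1: "k = 1" using k by simp
    have g0: "g 0 \<in> carrier PGL2" using g k1 PSL2_sub by auto
    define y where "y = inv\<^bsub>PGL2\<^esub> (g 0) \<otimes>\<^bsub>PGL2\<^esub> x \<otimes>\<^bsub>PGL2\<^esub> g 0"
    have S: "?S = {y}" using k1 by (simp add: y_def lessThan_Suc)
    have y: "y \<in> carrier PGL2" using g0 x by (simp add: y_def)
    have lc: "\<And>a b :: ('a^2^2) set. a \<in> carrier PGL2 \<Longrightarrow> b \<in> carrier PGL2 \<Longrightarrow> a \<otimes>\<^bsub>PGL2\<^esub> (inv\<^bsub>PGL2\<^esub> a \<otimes>\<^bsub>PGL2\<^esub> b) = b"
      by (simp add: P.m_assoc[symmetric])
    have yy: "y \<otimes>\<^bsub>PGL2\<^esub> y = \<one>\<^bsub>PGL2\<^esub>"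
    proof -
      have "y \<otimes>\<^bsub>PGL2\<^esub> y = inv\<^bsub>PGL2\<^esub> (g 0) \<otimes>\<^bsub>PGL2\<^esub> x \<otimes>\<^bsub>PGL2\<^esub> (g 0 \<otimes>\<^bsub>PGL2\<^esub> inv\<^bsub>PGL2\<^esub> (g 0)) \<otimes>\<^bsub>PGL2\<^esub> x \<otimes>\<^bsub>PGL2\<^esub> g 0"
        using g0 x lc by (simp add: y_def P.m_assoc)
      also have "\<dots> = inv\<^bsub>PGL2\<^esub> (g 0) \<otimes>\<^bsub>PGL2\<^esub> (x \<otimes>\<^bsub>PGL2\<^esub> x) \<otimes>\<^bsub>PGL2\<^esub> g 0"
        using g0 x by (simp add: P.m_assoc)
      also have "\<dots> = \<one>\<^bsub>PGL2\<^esub>" using g0 xx by simp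
      finally show ?thesis .
    qed
    have iy: "inv\<^bsub>PGL2\<^esub> y = y" using P.inv_equality[OF yy y y] .
    have sub: "subgroup {\<one>\<^bsub>PGL2\<^esub>, y} PGL2"
    proof (rule P.subgroupI)
      show "{\<one>\<^bsub>PGL2\<^esub>, y} \<subseteq> carrier PGL2" using y by simp
      show "{\<one>\<^bsub>PGL2\<^esub>, y} \<noteq> {}" by simp
      fix a b assume a: "a \<in> {\<one>\<^bsub>PGL2\<^esub>, y}" and b: "b \<in> {\<one>\<^bsub>PGL2\<^esub>, y}"
      from a show "inv\<^bsub>PGL2\<^esub> a \<in> {\<one>\<^bsub>PGL2\<^esub>, y}"
      proof (elim insertE)
        assume "a = \<one>\<^bsub>PGL2\<^esub>" then show ?thesis by simp
      next
        assume "a = y" then show ?thesis using iy by simp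
      qed simp
      have "a = \<one>\<^bsub>PGL2\<^esub> \<or> a = y" "b = \<one>\<^bsub>PGL2\<^esub> \<or> b = y" using a b by simp_all
      then show "a \<otimes>\<^bsub>PGL2\<^esub> b \<in> {\<one>\<^bsub>PGL2\<^esub>, y}"
        using y yy by (elim disjE) simp_all
    qed
    have "generate PGL2 ?S \<subseteq> {\<one>\<^bsub>PGL2\<^esub>, y}" unfolding S
      by (rule P.generate_subgroup_incl[OF _ sub]) simp
    then have "card (generate PGL2 ?S) \<le> card {\<one>\<^bsub>PGL2\<^esub>, y}" by (rule card_mono[rotated]) simp
    also have "\<dots> \<le> 2" by (simp add: card_insert_le_m1)
    finally show ?thesis .
  qed
  moreover have "card (generate PGL2 ?S) > 0"
  proof -
    have f: "finite (generate PGL2 ?S)" by (rule finite_gen)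
    have o: "\<one>\<^bsub>PGL2\<^esub> \<in> generate PGL2 ?S" by (rule generate.one)
    have ne: "generate PGL2 ?S \<noteq> {}" using o by (intro notI) simp
    show ?thesis using card_gt_0_iff[THEN iffD2, OF conjI[OF ne f]] .
  qed
  ultimately show ?thesis
  proof (intro notI)
    assume "card (generate PGL2 ?S) \<le> 2" "card (generate PGL2 ?S) > 0" "r dvd card (generate PGL2 ?S)"
    then have "r \<le> card (generate PGL2 ?S)" using dvd_imp_le by blast
    then show False using r3 \<open>card (generate PGL2 ?S) \<le> 2\<close> by linarith
  qed
qed

lemma char_contra:
  assumes "of_nat r = (0::'a::{finite,field})" "Factorial_Ring.prime r" "\<not> r dvd CARD('a)"
  shows False
proof -
  have "coprime r CARD('a)" using assms(2,3) by (simp add: prime_imp_coprime)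
  then have g: "gcd r CARD('a) = 1" by simp
  have "r \<noteq> 0" using assms(2) by auto
  then obtain u v where "r * u = CARD('a) * v + gcd r CARD('a)" using bezout_nat by blast
  then have "r * u = CARD('a) * v + 1" using g by simp
  then have "(of_nat (r * u) :: 'a) = of_nat (CARD('a) * v + 1)" by simp
  then have "(0::'a) = 1" using assms(1) of_nat_card[where 'a='a] by simp
  then show False by simp
qed

lemma luc21: "luc 2 1 n = (of_nat n, 1 - of_nat n)"
  by (induction n) (simp_all add: algebra_simps)



lemma inv_form:
  assumes YY: "Y ** Y = mat l" and dY: "det Y \<noteq> 0" and ns: "(Y::'a::{finite,field}^2^2) \<notin> scalars"
  shows "Y$2$2 = - Y$1$1 \<and> \<not> (Y$1$2 = 0 \<and> Y$2$1 = 0 \<and> Y$1$1 = Y$2$2)"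
proof -
  have nf: "\<not> (Y$1$2 = 0 \<and> Y$2$1 = 0 \<and> Y$1$1 = Y$2$2)"
  proof
    assume h: "Y$1$2 = 0 \<and> Y$2$1 = 0 \<and> Y$1$1 = Y$2$2"
    then have Ym: "Y = mat (Y$1$1)" unfolding m2_eq by (simp add: mat_nth)
    then have "Y$1$1 \<noteq> 0" using dY by (metis det_mat2 mult_zero_left)
    then show False using ns Ym by (auto simp: scalars_def)
  qed
  have e12: "Y$1$2 * (Y$1$1 + Y$2$2) = 0" using arg_cong[OF YY, of "\<lambda>A. A$1$2"] by (simp add: mm2 mat_nth algebra_simps)
  have e21: "Y$2$1 * (Y$1$1 + Y$2$2) = 0" using arg_cong[OF YY, of "\<lambda>A. A$2$1"] by (simp add: mm2 mat_nth algebra_simps)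
  have e11: "Y$1$1 * Y$1$1 + Y$1$2 * Y$2$1 = l" using arg_cong[OF YY, of "\<lambda>A. A$1$1"] by (simp add: mm2 mat_nth)
  have e22: "Y$2$1 * Y$1$2 + Y$2$2 * Y$2$2 = l" using arg_cong[OF YY, of "\<lambda>A. A$2$2"] by (simp add: mm2 mat_nth)
  have "Y$1$1 + Y$2$2 = 0"
  proof (rule ccontr)
    assume s: "Y$1$1 + Y$2$2 \<noteq> 0"
    then have "Y$1$2 = 0" "Y$2$1 = 0" using e12 e21 by simp_all
    then have "Y$1$1 * Y$1$1 = Y$2$2 * Y$2$2" using e11 e22 by simp
    then have "(Y$1$1 - Y$2$2) * (Y$1$1 + Y$2$2) = 0" by (simp add: algebra_simps)
    then have "Y$1$1 = Y$2$2" using s by simp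
    then show False using nf \<open>Y$1$2 = 0\<close> \<open>Y$2$1 = 0\<close> by simp
  qed
  then show ?thesis using nf by (simp add: eq_neg_iff_add_eq_0 add.commute)
qed

lemma luc02: "fst (luc 0 1 2) = (0::'a::comm_ring_1)"
  by (simp add: numeral_2_eq_2)



lemma scale_zero_iff: "(D::'a::field) \<noteq> 0 \<Longrightarrow> D * a' = D ^ n * a \<Longrightarrow> (a' = 0) = (a = 0)"
  by (metis mult_eq_0_iff power_eq_0_iff)

lemma upper:
  fixes x :: "('a::{finite,field}^2^2) set" and r :: nat
  assumes simple: "simple_group (PSL2 :: ('a^2^2) set monoid)"
    and r: "Factorial_Ring.prime r" "odd r"
    and rL: "r dvd card (carrier (PSL2 :: ('a^2^2) set monoid))"
    and rq: "\<not> r dvd CARD('a)"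
    and x: "x \<in> carrier PGL2" and x1: "x \<noteq> \<one>\<^bsub>PGL2\<^esub>" and xx: "x \<otimes>\<^bsub>PGL2\<^esub> x = \<one>\<^bsub>PGL2\<^esub>"
  shows "\<exists>g. (\<forall>i<2. g i \<in> carrier PSL2) \<and>
     r dvd card (generate PGL2 ((\<lambda>i. inv\<^bsub>PGL2\<^esub> (g i) \<otimes>\<^bsub>PGL2\<^esub> x \<otimes>\<^bsub>PGL2\<^esub> g i) ` {..<(2::nat)}))"
proof -
  interpret P: group "PGL2 :: ('a^2^2) set monoid" by (rule PGL2_group)
  have gL: "group (PSL2 :: ('a^2^2) set monoid)" using simple by (rule simple_group.axioms(1))
  have r2: "r \<noteq> 2" using r(2) by (metis even_numeral)
  have r3: "r \<ge> 3" using prime_ge_2_nat[OF r(1)] r2 by linarith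
  obtain Y where Y: "Y \<in> carrier GL2" and xY: "x = cls Y" using x unfolding PGL2_carrier by blast
  have Yns: "Y \<notin> scalars" using x1 cls_one_iff[OF Y] xY by (simp add: PGL2_one)
  have YYc: "Y ** Y \<in> carrier GL2" using Y by (simp add: det_mul)
  have "cls (Y ** Y) = scalars" using xx xY cls_mult[OF Y Y] by (simp add: PGL2_one)
  then have "Y ** Y \<in> scalars" using cls_one_iff[OF YYc] by simp
  then obtain l where YY: "Y ** Y = mat l" by (auto simp: scalars_def)
  have dY: "det Y \<noteq> 0" using Y by simp
  have form: "Y$2$2 = - Y$1$1" "\<not> (Y$1$2 = 0 \<and> Y$2$1 = 0 \<and> Y$1$1 = Y$2$2)"
    using inv_form[OF YY dY Yns] by auto
  have finL: "finite (carrier (PSL2 :: ('a^2^2) set monoid))" by (rule finite_gen)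
  have "order (PSL2 :: ('a^2^2) set monoid) = r ^ 1 * (order (PSL2 :: ('a^2^2) set monoid) div r)"
    using rL by (simp add: order_def)
  then obtain Q where Q: "subgroup Q (PSL2 :: ('a^2^2) set monoid)" and cQ: "card Q = r ^ 1"
    using sylow_thm[OF r(1) gL _ finL] by blast
  have "\<not> Q \<subseteq> {\<one>\<^bsub>PSL2\<^esub>}"
  proof
    assume "Q \<subseteq> {\<one>\<^bsub>PSL2\<^esub>}"
    then have "card Q \<le> card {\<one>\<^bsub>PSL2 :: ('a^2^2) set monoid\<^esub>}" by (intro card_mono) simp_all
    then have "card Q \<le> 1" by simp
    then show False using cQ r3 by simp
  qed
  then have "\<exists>t. t \<in> Q \<and> t \<noteq> \<one>\<^bsub>PSL2\<^esub>" by (simp add: subset_iff)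
  then obtain t where tQ: "t \<in> Q" and t1: "t \<noteq> \<one>\<^bsub>PSL2\<^esub>" by (elim exE conjE)
  have tL: "t \<in> carrier PSL2" using subgroup.subset[OF Q] tQ by blast
  have tP: "t \<in> carrier PGL2" using tL PSL2_sub by blast
  have tr: "t [^]\<^bsub>PGL2\<^esub> r = \<one>\<^bsub>PGL2\<^esub>"
  proof -
    have gQ: "group ((PSL2 :: ('a^2^2) set monoid)\<lparr>carrier := Q\<rparr>)" by (rule subgroup.subgroup_is_group[OF Q gL])
    have "t [^]\<^bsub>(PSL2 :: ('a^2^2) set monoid)\<lparr>carrier := Q\<rparr>\<^esub> order ((PSL2 :: ('a^2^2) set monoid)\<lparr>carrier := Q\<rparr>) = \<one>\<^bsub>(PSL2 :: ('a^2^2) set monoid)\<lparr>carrier := Q\<rparr>\<^esub>"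
      by (rule group.pow_order_eq_1[OF gQ]) (simp add: tQ)
    then show ?thesis using cQ by (simp add: order_def pow_upd PSL2_pow PSL2_one PGL2_one)
  qed
  have tpow: "t [^]\<^bsub>PGL2\<^esub> n = \<one>\<^bsub>PGL2\<^esub> \<longleftrightarrow> r dvd n" for n :: nat
  proof -
    define od where "od = group.ord PGL2 t"
    have oe: "t [^]\<^bsub>PGL2\<^esub> n = \<one>\<^bsub>PGL2\<^esub> \<longleftrightarrow> od dvd n" for n :: nat
      unfolding od_def by (rule P.pow_eq_id[OF tP])
    have "od dvd r" using oe tr by blast
    moreover have "od \<noteq> 1"
    proof
      assume "od = 1"
      then have "t [^]\<^bsub>PGL2\<^esub> (1::nat) = \<one>\<^bsub>PGL2\<^esub>" using oe[of 1] by simp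
      moreover have "t [^]\<^bsub>PGL2\<^esub> (1::nat) = t" using tP by (simp only: One_nat_def nat_pow_Suc nat_pow_0 P.l_one)
      ultimately show False using t1 by (simp add: PSL2_one PGL2_one)
    qed
    ultimately have "od = r" using r(1) unfolding prime_nat_iff by blast
    then show ?thesis using oe by simp
  qed
  obtain T where T: "T \<in> SL2" and tT: "t = cls T" using tL unfolding PSL2_carrier by blast
  have dT: "det T = 1" using T by (simp add: SL2_def)
  have TG: "T \<in> carrier GL2" using dT by simp
  have Tns: "T \<notin> scalars" using t1 cls_one_iff[OF TG] tT by (simp add: PSL2_one)
  have lucT: "fst (luc (tr2 T) 1 n) = 0 \<longleftrightarrow> r dvd n" for n
    using cls_pow_one_iff[OF TG Tns, of n] tpow[of n] tT dT by simp
  define t0 where "t0 = tr2 T"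
  have t0: "t0 \<noteq> 0"
  proof
    assume "t0 = 0"
    then have "r dvd 2" using lucT[of 2] luc02[where 'a='a] by (simp add: t0_def)
    then have "r \<le> 2" by (rule dvd_imp_le) simp
    then show False using r3 by linarith
  qed
  define D where "D = det Y"
  have s0: "D * t0 \<noteq> 0" using dY t0 by (simp add: D_def)
  obtain G where dG: "det G = 1" and trM: "tr2 (Y ** (inv2 G ** Y ** G)) = D * t0"
      and dM: "det (Y ** (inv2 G ** Y ** G)) = det Y * det Y"
    using conj_trace[OF dY form s0] by blast
  define M where "M = Y ** (inv2 G ** Y ** G)"
  have lucM: "fst (luc (tr2 M) (det M) n) = 0 \<longleftrightarrow> fst (luc t0 1 n) = 0" for n
  proof -
    have "D * fst (luc (D * t0) (D^2 * 1) n) = D ^ n * fst (luc t0 1 n)" using luc_scale[of D t0 1 n] by simp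
    moreover have "tr2 M = D * t0" "det M = D^2 * 1" using trM dM by (simp_all add: M_def D_def power2_eq_square)
    ultimately show ?thesis using scale_zero_iff[of D] dY by (simp add: D_def)
  qed
  have MG: "M \<in> carrier GL2" using dM dY by (simp add: M_def)
  have Mns: "M \<notin> scalars"
  proof
    assume "M \<in> scalars"
    then obtain c where Mc: "M = mat c" and c: "c \<noteq> 0" by (auto simp: scalars_def)
    have "c * fst (luc (c * 2) (c^2 * 1) n) = c ^ n * fst (luc 2 1 n)" for n
      using luc_scale[of c 2 1 n] by simp
    moreover have "tr2 M = c * 2" "det M = c^2 * 1" using Mc by (simp_all add: tr2_def mat_nth power2_eq_square)
    ultimately have "fst (luc (tr2 M) (det M) r) = 0 \<longleftrightarrow> of_nat r = (0::'a)" using c scale_zero_iff[of c] by (simp add: luc21)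
    moreover have "fst (luc (tr2 M) (det M) r) = 0" using lucM lucT[of r] by (simp add: t0_def)
    ultimately have "of_nat r = (0::'a)" by simp
    then show False using char_contra r(1) rq by blast
  qed
  have hpow: "cls M [^]\<^bsub>PGL2\<^esub> n = \<one>\<^bsub>PGL2\<^esub> \<longleftrightarrow> r dvd n" for n :: nat
    using cls_pow_one_iff[OF MG Mns, of n] lucM[of n] lucT[of n] by (simp add: t0_def)
  define g :: "nat \<Rightarrow> ('a^2^2) set" where "g i = (if i = 0 then \<one>\<^bsub>PGL2\<^esub> else cls G)" for i
  have GS: "G \<in> SL2" using dG by (simp add: SL2_def)
  have GG: "G \<in> carrier GL2" using dG by simp
  have GiG: "inv2 G \<in> carrier GL2" using dG by (simp add: det_inv2)
  have gL2: "\<forall>i<2. g i \<in> carrier PSL2"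
  proof (intro allI impI)
    fix i :: nat assume "i < 2"
    have "mat 1 \<in> (SL2 :: ('a^2^2) set)" by (simp add: SL2_def)
    then have "cls (mat 1) \<in> carrier (PSL2 :: ('a^2^2) set monoid)" unfolding PSL2_carrier by blast
    moreover have e: "cls (mat 1) = (scalars :: ('a^2^2) set)" by (rule cls_scalar[OF mat1_scalars])
    ultimately have "\<one>\<^bsub>PGL2\<^esub> \<in> carrier (PSL2 :: ('a^2^2) set monoid)" unfolding PGL2_one by simp
    moreover have "cls G \<in> carrier (PSL2 :: ('a^2^2) set monoid)" unfolding PSL2_carrier using GS by blast
    ultimately show "g i \<in> carrier PSL2" by (simp add: g_def)
  qed
  define S where "S = (\<lambda>i. inv\<^bsub>PGL2\<^esub> (g i) \<otimes>\<^bsub>PGL2\<^esub> x \<otimes>\<^bsub>PGL2\<^esub> g i) ` {..<(2::nat)}"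
  have y0: "x \<in> S" unfolding S_def using x by (intro image_eqI[of _ _ 0]) (simp_all add: g_def)
  have y1: "inv\<^bsub>PGL2\<^esub> (cls G) \<otimes>\<^bsub>PGL2\<^esub> x \<otimes>\<^bsub>PGL2\<^esub> cls G \<in> S"
    unfolding S_def by (intro image_eqI[of _ _ 1]) (simp_all add: g_def)
  have hM: "x \<otimes>\<^bsub>PGL2\<^esub> (inv\<^bsub>PGL2\<^esub> (cls G) \<otimes>\<^bsub>PGL2\<^esub> x \<otimes>\<^bsub>PGL2\<^esub> cls G) = cls M"
    unfolding xY M_def cls_inv[OF GG]
    using GG GiG Y by (simp add: cls_mult det_mul)
  have Ssub: "S \<subseteq> carrier PGL2" unfolding S_def using x gL2 PSL2_sub by auto
  define H where "H = generate PGL2 S"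
  have hH: "cls M \<in> H" unfolding H_def hM[symmetric]
    by (rule generate.eng[OF generate.incl[OF y0] generate.incl[OF y1]])
  have subH: "subgroup H PGL2" unfolding H_def by (rule P.generate_is_subgroup[OF Ssub])
  have gH: "group (PGL2\<lparr>carrier := H\<rparr>)" by (rule subgroup.subgroup_is_group[OF subH PGL2_group])
  have "cls M [^]\<^bsub>PGL2\<lparr>carrier := H\<rparr>\<^esub> order (PGL2\<lparr>carrier := H\<rparr>) = \<one>\<^bsub>PGL2\<lparr>carrier := H\<rparr>\<^esub>"
    by (rule group.pow_order_eq_1[OF gH]) (simp add: hH)
  then have "cls M [^]\<^bsub>PGL2\<^esub> card H = \<one>\<^bsub>PGL2\<^esub>" by (simp add: order_def pow_upd)
  then have "r dvd card H" using hpow by blast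
  then show ?thesis using gL2 unfolding H_def S_def by blast
qed


theorem lemma1p9:
  fixes x :: "('a::{finite,field}^2^2) set" and r :: nat
  assumes "simple_group (PSL2 :: ('a^2^2) set monoid)"
    and "Factorial_Ring.prime r" and "odd r"
    and "r dvd card (carrier (PSL2 :: ('a^2^2) set monoid))"
    and "\<not> r dvd CARD('a)"
    and "x \<in> carrier PGL2" and "x \<noteq> \<one>\<^bsub>PGL2\<^esub>" and "x \<otimes>\<^bsub>PGL2\<^esub> x = \<one>\<^bsub>PGL2\<^esub>"
  shows "beta PGL2 (carrier PSL2) x r = 2"
  unfolding beta_def
proof (rule Least_equality)
  show "\<exists>g. (\<forall>i<2. g i \<in> carrier PSL2) \<and>
     r dvd card (generate PGL2 ((\<lambda>i. inv\<^bsub>PGL2\<^esub> (g i) \<otimes>\<^bsub>PGL2\<^esub> x \<otimes>\<^bsub>PGL2\<^esub> g i) ` {..<(2::nat)}))"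
    by (rule upper[OF assms])
next
  fix y :: nat
  assume "\<exists>g. (\<forall>i<y. g i \<in> carrier PSL2) \<and>
     r dvd card (generate PGL2 ((\<lambda>i. inv\<^bsub>PGL2\<^esub> (g i) \<otimes>\<^bsub>PGL2\<^esub> x \<otimes>\<^bsub>PGL2\<^esub> g i) ` {..<y}))"
  then obtain g where g: "\<forall>i<y. g i \<in> carrier PSL2"
    and d: "r dvd card (generate PGL2 ((\<lambda>i. inv\<^bsub>PGL2\<^esub> (g i) \<otimes>\<^bsub>PGL2\<^esub> x \<otimes>\<^bsub>PGL2\<^esub> g i) ` {..<y}))"
    by blast
  show "2 \<le> y"
  proof (rule ccontr)
    assume "\<not> 2 \<le> y"
    then have "y < 2" by simp
    from lower[OF assms(2,3,6,8) this g] d show False by blast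
  qed
qed

end
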